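(* If $\sigma\in\operatorname{Aut}(\mathcal{H}_N)$, then $\sigma(\mathcal{H}_N')=\mathcal{H}_N'$ and $\sigma(\mathfrak h)=\mathfrak h$.
   Context: $\mathbb{K}$ is an algebraically closed field of characteristic zero, $N=2m\ge2$ even, $(\cdot,\cdot)$ the bilinear form on $\mathbb{K}^N$ with $(e_i,e_j)=\delta_{ij}$. Let $A_N=\mathbb{K}[t_1^{\pm1},\dots,t_N^{\pm1}]$, $d_i=t_i\frac{\partial}{\partial t_i}$, $t^{\bm r}=t_1^{r_1}\cdots t_N^{r_N}$, $D(u,\bm r)=\sum_i u_it^{\bm r}d_i$. Let $\bm J=\begin{pmatrix} O_m & I_m\\ -I_m & O_m\end{pmatrix}$, $\overline{\bm r}=\bm J\bm r$, $h_{\bm r}=D(\overline{\bm r},\bm r)$, $\mathfrak h=\operatorname{span}_{\mathbb{K}}\{d_1,\dots,d_N\}=\{D(u,\bm0):u\in\mathbb{K}^N\}$. The Hamiltonian Lie algebra is $\mathcal{H}_N=\operatorname{span}_{\mathbb{K}}\{h_{\bm r}:\bm r\ne\bm0\}\oplus\mathfrak h$ with commutator bracket ($[h_{\bm r},h_{\bm s}]=(\overline{\bm r},\bm s)h_{\bm r+\bm s}$, $[D(u,\bm0),h_{\bm r}]=(u,\bm r)h_{\bm r}$), and $\mathcal{H}_N'=[\mathcal{H}_N,\mathcal{H}_N]=\operatorname{span}_{\mathbb{K}}\{h_{\bm r}:\bm r\ne\bm0\}$. *)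

theory Defs
  imports "HOL-Computational_Algebra.Polynomial"
begin

text \<open>Concrete model of the Hamiltonian Lie algebra H_N, N = 2m.
  Lattice vectors r in Z^N are functions nat => int vanishing outside {..<N};
  an element  sum_r c(r) h_r + D(u,0)  is encoded as the pair (c, u), where
  c : Z^N => K is finitely supported with c 0 = 0, and u : nat => K vanishes outside {..<N}.\<close>

type_synonym 'k ham = "((nat \<Rightarrow> int) \<Rightarrow> 'k) \<times> (nat \<Rightarrow> 'k)"

definition lat :: "nat \<Rightarrow> (nat \<Rightarrow> int) set" where
  "lat N = {r. \<forall>i\<ge>N. r i = 0}"

text \<open>The bilinear form (Jr, s) with J = [[0, I_m], [-I_m, 0]]:
  (Jr)_i = r_(i+m) for i < m, (Jr)_(m+i) = - r_i.\<close>
definition sympl :: "nat \<Rightarrow> (nat \<Rightarrow> int) \<Rightarrow> (nat \<Rightarrow> int) \<Rightarrow> int" where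
  "sympl m r s = (\<Sum>i<m. r (i + m) * s i - r i * s (i + m))"

definition pair :: "nat \<Rightarrow> (nat \<Rightarrow> 'k::field) \<Rightarrow> (nat \<Rightarrow> int) \<Rightarrow> 'k" where
  "pair N u s = (\<Sum>i<N. u i * of_int (s i))"

definition ham_carrier :: "nat \<Rightarrow> ('k::field) ham set" where
  "ham_carrier m = {(c, u). finite {r. c r \<noteq> 0} \<and> (\<forall>r. c r \<noteq> 0 \<longrightarrow> r \<in> lat (2*m) \<and> r \<noteq> (\<lambda>i. 0))
                     \<and> (\<forall>i\<ge>2*m. u i = 0)}"

definition ham_add :: "('k::field) ham \<Rightarrow> 'k ham \<Rightarrow> 'k ham" where
  "ham_add x y = ((\<lambda>r. fst x r + fst y r), (\<lambda>i. snd x i + snd y i))"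

definition ham_scale :: "'k::field \<Rightarrow> 'k ham \<Rightarrow> 'k ham" where
  "ham_scale a x = ((\<lambda>r. a * fst x r), (\<lambda>i. a * snd x i))"

text \<open>Bracket: [h_r, h_s] = (Jr, s) h_(r+s), [D(u,0), h_r] = (u, r) h_r, [h, h] = 0.\<close>
definition ham_bracket :: "nat \<Rightarrow> ('k::field) ham \<Rightarrow> 'k ham \<Rightarrow> 'k ham" where
  "ham_bracket m x y =
     ((\<lambda>s. if s = (\<lambda>i. 0) then 0 else
            (\<Sum>r\<in>{r. fst x r \<noteq> 0}. fst x r * fst y (\<lambda>i. s i - r i) * of_int (sympl m r (\<lambda>i. s i - r i)))
            + pair (2*m) (snd x) s * fst y s - pair (2*m) (snd y) s * fst x s),
      (\<lambda>i. 0))"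

definition ham_aut :: "nat \<Rightarrow> (('k::field) ham \<Rightarrow> 'k ham) \<Rightarrow> bool" where
  "ham_aut m \<sigma> \<longleftrightarrow> bij_betw \<sigma> (ham_carrier m) (ham_carrier m)
     \<and> (\<forall>x\<in>ham_carrier m. \<forall>y\<in>ham_carrier m. \<sigma> (ham_add x y) = ham_add (\<sigma> x) (\<sigma> y))
     \<and> (\<forall>a. \<forall>x\<in>ham_carrier m. \<sigma> (ham_scale a x) = ham_scale a (\<sigma> x))
     \<and> (\<forall>x\<in>ham_carrier m. \<forall>y\<in>ham_carrier m.
          \<sigma> (ham_bracket m x y) = ham_bracket m (\<sigma> x) (\<sigma> y))"

text \<open>H_N' = span of the h_r (r nonzero); h = span of d_1..d_N.\<close>
definition ham_derived :: "nat \<Rightarrow> ('k::field) ham set" where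
  "ham_derived m = {x \<in> ham_carrier m. snd x = (\<lambda>i. 0)}"

definition ham_cartan :: "nat \<Rightarrow> ('k::field) ham set" where
  "ham_cartan m = {x \<in> ham_carrier m. fst x = (\<lambda>r. 0)}"

end

theory Submission
  imports Defs "HOL-Library.Fun_Lexorder"
begin

definition hv :: "(nat \<Rightarrow> int) \<Rightarrow> ('k::field) ham" where
  "hv t = ((\<lambda>r. if r = t then 1 else 0), (\<lambda>i. 0))"

lemma carrier_iff: "x \<in> ham_carrier m \<longleftrightarrow> finite {r. fst x r \<noteq> 0} \<and> (\<forall>r. fst x r \<noteq> 0 \<longrightarrow> r \<in> lat (2*m) \<and> r \<noteq> (\<lambda>i. 0))
                     \<and> (\<forall>i\<ge>2*m. snd x i = 0)"
  by (cases x) (simp add: ham_carrier_def)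

lemma hv_carrier: "t \<in> lat (2*m) \<Longrightarrow> t \<noteq> (\<lambda>i. 0) \<Longrightarrow> hv t \<in> ham_carrier m"
  by (auto simp: carrier_iff hv_def)

lemma scale_carrier: "x \<in> ham_carrier m \<Longrightarrow> ham_scale a x \<in> ham_carrier m"
proof -
  assume x: "x \<in> ham_carrier m"
  have "{r. a * fst x r \<noteq> 0} \<subseteq> {r. fst x r \<noteq> 0}" by auto
  then show ?thesis using x by (auto simp: carrier_iff ham_scale_def intro: finite_subset)
qed

lemma add_carrier: "x \<in> ham_carrier m \<Longrightarrow> y \<in> ham_carrier m \<Longrightarrow> ham_add x y \<in> ham_carrier m"
proof -
  assume x: "x \<in> ham_carrier m" and y: "y \<in> ham_carrier m"
  have "{r. fst x r + fst y r \<noteq> 0} \<subseteq> {r. fst x r \<noteq> 0} \<union> {r. fst y r \<noteq> 0}" by auto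
  then show ?thesis using x y by (auto simp: carrier_iff ham_add_def intro: finite_subset)
qed

lemma aut_zero:
  assumes "ham_aut m \<sigma>" and "x \<in> ham_carrier m"
  shows "\<sigma> (ham_scale 0 x) = ((\<lambda>r. 0), (\<lambda>i. 0))"
proof -
  have "\<sigma> (ham_scale 0 x) = ham_scale 0 (\<sigma> x)" using assms by (simp add: ham_aut_def)
  then show ?thesis by (simp add: ham_scale_def)
qed

lemma aut_carrier: "ham_aut m \<sigma> \<Longrightarrow> x \<in> ham_carrier m \<Longrightarrow> \<sigma> x \<in> ham_carrier m"
  unfolding ham_aut_def bij_betw_def by blast

lemma bracket_snd: "snd (ham_bracket m x y) = (\<lambda>i. 0)"
  by (simp add: ham_bracket_def)

lemma pair_zero: "pair N (\<lambda>i. 0) s = 0"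
  by (simp add: pair_def)

lemma pair_unit: "k < N \<Longrightarrow> pair N (\<lambda>i. if i = k then 1 else 0) s = of_int (s k)"
proof -
  assume k: "k < N"
  have "pair N (\<lambda>i. if i = k then 1 else 0) s = (\<Sum>i<N. if i = k then of_int (s k) else 0)"
    unfolding pair_def by (rule sum.cong) auto
  then show ?thesis using k by simp
qed

lemma hv_bracket:
  fixes t :: "nat \<Rightarrow> int"
  assumes "t \<in> lat (2*m)" "t \<noteq> (\<lambda>i. 0)"
  shows "\<exists>a\<in>ham_carrier m. \<exists>b\<in>ham_carrier m. (hv t :: ('k::field_char_0) ham) = ham_bracket m a b"
proof -
  obtain k where k: "t k \<noteq> 0" using assms(2) by auto
  have k2: "k < 2*m" using k assms(1) by (auto simp: lat_def) (meson not_le)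
  define a :: "'k ham" where "a = ((\<lambda>r. 0), (\<lambda>i. if i = k then 1 else 0))"
  define b :: "'k ham" where "b = ham_scale (1 / of_int (t k)) (hv t)"
  have ac: "a \<in> ham_carrier m" using k2 by (auto simp: a_def ham_carrier_def)
  have bc: "b \<in> ham_carrier m" unfolding b_def by (rule scale_carrier[OF hv_carrier[OF assms]])
  have "ham_bracket m a b = hv t"
    unfolding ham_bracket_def a_def b_def hv_def ham_scale_def
    using k k2 assms(2) by (auto simp: pair_unit pair_zero intro!: ext)
  then show ?thesis using ac bc by metis
qed

lemma aut_hv_snd:
  assumes "ham_aut m \<sigma>" "t \<in> lat (2*m)" "t \<noteq> (\<lambda>i. 0)"
  shows "snd (\<sigma> (hv t :: ('k::field_char_0) ham)) = (\<lambda>i. 0)"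
proof -
  obtain a b where ab: "a \<in> ham_carrier m" "b \<in> ham_carrier m" "(hv t :: 'k ham) = ham_bracket m a b"
    using hv_bracket[OF assms(2,3)] by blast
  have "\<sigma> (hv t) = ham_bracket m (\<sigma> a) (\<sigma> b)" using assms(1) ab by (simp add: ham_aut_def)
  then show ?thesis by (simp add: bracket_snd)
qed

lemma lin_decomp:
  fixes \<sigma> :: "('k::field_char_0) ham \<Rightarrow> 'k ham"
  assumes aut: "ham_aut m \<sigma>" and fin: "finite F"
  shows "q \<in> ham_carrier m \<Longrightarrow> snd q = (\<lambda>i. 0) \<Longrightarrow> (\<forall>r. fst q r \<noteq> 0 \<longrightarrow> r \<in> F) \<Longrightarrow>
    snd (\<sigma> q) = (\<lambda>i. 0) \<and> (\<forall>r. fst (\<sigma> q) r \<noteq> 0 \<longrightarrow> r \<in> (\<Union>t\<in>F. {r. fst (\<sigma> (hv t)) r \<noteq> 0}))"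
  using fin
proof (induction F arbitrary: q rule: finite_induct)
  case empty
  have "q = ham_scale 0 q" using empty by (cases q) (auto simp: ham_scale_def)
  then have "\<sigma> q = ((\<lambda>r. 0), (\<lambda>i. 0))" using aut_zero[OF aut empty(1)] by simp
  then show ?case by simp
next
  case (insert t F)
  show ?case
  proof (cases "fst q t = 0")
    case True
    then have "\<forall>r. fst q r \<noteq> 0 \<longrightarrow> r \<in> F" using insert.prems(3) by auto
    then show ?thesis using insert.IH[OF insert.prems(1,2)] by auto
  next
    case False
    have tl: "t \<in> lat (2*m)" "t \<noteq> (\<lambda>i. 0)" using False insert.prems(1) by (auto simp: carrier_iff)
    define q' where "q' = ((fst q)(t := 0), snd q)"
    have q'c: "q' \<in> ham_carrier m"
    proof -
      have "{r. ((fst q)(t := 0)) r \<noteq> 0} \<subseteq> {r. fst q r \<noteq> 0}" by auto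
      then show ?thesis using insert.prems(1) by (auto simp: carrier_iff q'_def intro: finite_subset)
    qed
    have q'F: "\<forall>r. fst q' r \<noteq> 0 \<longrightarrow> r \<in> F" using insert.prems(3) by (auto simp: q'_def)
    have IH: "snd (\<sigma> q') = (\<lambda>i. 0) \<and> (\<forall>r. fst (\<sigma> q') r \<noteq> 0 \<longrightarrow> r \<in> (\<Union>t\<in>F. {r. fst (\<sigma> (hv t)) r \<noteq> 0}))"
      using insert.IH[OF q'c _ q'F] insert.prems(2) by (simp add: q'_def)
    have hc: "ham_scale (fst q t) (hv t) \<in> ham_carrier m" by (rule scale_carrier[OF hv_carrier[OF tl]])
    have qd: "q = ham_add (ham_scale (fst q t) (hv t)) q'"
      by (cases q) (auto simp: ham_add_def ham_scale_def hv_def q'_def intro!: ext)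
    have "\<sigma> q = ham_add (\<sigma> (ham_scale (fst q t) (hv t))) (\<sigma> q')"
      using aut hc q'c qd by (metis ham_aut_def)
    also have "\<sigma> (ham_scale (fst q t) (hv t)) = ham_scale (fst q t) (\<sigma> (hv t))"
      using aut hv_carrier[OF tl] unfolding ham_aut_def by blast
    finally have sq: "\<sigma> q = ham_add (ham_scale (fst q t) (\<sigma> (hv t))) (\<sigma> q')" .
    have hs: "snd (\<sigma> (hv t :: 'k ham)) = (\<lambda>i. 0)" by (rule aut_hv_snd[OF aut tl])
    show ?thesis
      using IH hs unfolding sq by (auto simp: ham_add_def ham_scale_def)
  qed
qed

lemma bracket_cartan:
  "ham_bracket m ((\<lambda>r. 0), u) q = ((\<lambda>s. if s = (\<lambda>i. 0) then 0 else pair (2*m) u s * fst q s), (\<lambda>i. 0))"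
  unfolding ham_bracket_def by (simp cong: if_cong)

lemma iter_cartan:
  assumes "q \<in> ham_carrier m"
  shows "(ham_bracket m ((\<lambda>r. 0), u) ^^ n) q \<in> ham_carrier m \<and>
     (\<forall>r. fst ((ham_bracket m ((\<lambda>r. 0), u) ^^ n) q) r \<noteq> 0 \<longrightarrow> fst q r \<noteq> 0) \<and>
     (n > 0 \<longrightarrow> snd ((ham_bracket m ((\<lambda>r. 0), u) ^^ n) q) = (\<lambda>i. 0))"
proof (induction n)
  case 0
  then show ?case using assms by simp
next
  case (Suc n)
  let ?y = "(ham_bracket m ((\<lambda>r. 0), u) ^^ n) q"
  have "{s. (if s = (\<lambda>i. 0) then 0 else pair (2*m) u s * fst ?y s) \<noteq> 0} \<subseteq> {r. fst ?y r \<noteq> 0}" by auto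
  have y: "?y \<in> ham_carrier m" "\<forall>r. fst ?y r \<noteq> 0 \<longrightarrow> fst q r \<noteq> 0" using Suc by auto
  have "(ham_bracket m ((\<lambda>r. 0), u) ^^ Suc n) q = ((\<lambda>s. if s = (\<lambda>i. 0) then 0 else pair (2*m) u s * fst ?y s), (\<lambda>i. 0))"
    by (simp add: bracket_cartan)
  moreover have "(\<lambda>s. if s = (\<lambda>i. 0) then 0 else pair (2*m) u s * fst ?y s, \<lambda>i. 0) \<in> ham_carrier m"
  proof -
    have "finite {r. fst ?y r \<noteq> 0}" using y(1) by (simp add: carrier_iff)
    moreover have "{s. (if s = (\<lambda>i. 0) then 0 else pair (2*m) u s * fst ?y s) \<noteq> 0} \<subseteq> {r. fst ?y r \<noteq> 0}" by auto
    ultimately have "finite {s. (if s = (\<lambda>i. 0) then 0 else pair (2*m) u s * fst ?y s) \<noteq> 0}" by (rule finite_subset[rotated])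
    then show ?thesis using y(1) unfolding carrier_iff by (auto split: if_splits)
  qed
  ultimately show ?case using y(2) by auto
qed

lemma iter_sigma:
  assumes aut: "ham_aut m \<sigma>" and d: "d \<in> ham_cartan m" and z: "z \<in> ham_carrier m"
  shows "\<sigma> ((ham_bracket m d ^^ n) z) = (ham_bracket m (\<sigma> d) ^^ n) (\<sigma> z)"
proof (induction n)
  case 0
  then show ?case by simp
next
  case (Suc n)
  obtain u where du: "d = ((\<lambda>r. 0), u)" using d by (cases d) (auto simp: ham_cartan_def)
  have dc: "d \<in> ham_carrier m" using d by (simp add: ham_cartan_def)
  have "(ham_bracket m d ^^ n) z \<in> ham_carrier m" using iter_cartan[OF z] du by simp
  then show ?case using Suc aut dc by (simp add: ham_aut_def)
qed

lemma sympl_add: "sympl m r (\<lambda>i. a i + int n * r i) = sympl m r a"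
  unfolding sympl_def by (rule sum.cong) (auto simp: algebra_simps)

lemma bracket_fst:
  "fst (ham_bracket m x y) t = (if t = (\<lambda>i. 0) then 0 else
     (\<Sum>r\<in>{r. fst x r \<noteq> 0}. fst x r * fst y (\<lambda>i. t i - r i) * of_int (sympl m r (\<lambda>i. t i - r i)))
            + pair (2*m) (snd x) t * fst y t - pair (2*m) (snd y) t * fst x t)"
  by (simp add: ham_bracket_def)

lemma iter_top:
  fixes x :: "('k::field_char_0) ham" and lt :: "(nat\<Rightarrow>int) \<Rightarrow> (nat\<Rightarrow>int) \<Rightarrow> bool"
  assumes fin: "finite {r. fst x r \<noteq> 0}"
    and irr: "\<And>a. \<not> lt a a" and tr: "\<And>a b c. lt a b \<Longrightarrow> lt b c \<Longrightarrow> lt a c"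
    and tot: "\<And>a b. a = b \<or> lt a b \<or> lt b a"
    and tra: "\<And>a b w. lt a b \<Longrightarrow> lt (\<lambda>i. a i + w i) (\<lambda>i. b i + w i)"
    and r0: "fst x r0 \<noteq> 0" "\<And>r. fst x r \<noteq> 0 \<Longrightarrow> r \<noteq> r0 \<Longrightarrow> lt r r0" "lt (\<lambda>i. 0) r0"
    and s: "lt (\<lambda>i. 0) s"
  shows "snd ((ham_bracket m x ^^ n) (hv s)) = (\<lambda>i. 0) \<and>
    (\<forall>t. fst ((ham_bracket m x ^^ n) (hv s)) t \<noteq> 0 \<longrightarrow> t = (\<lambda>i. s i + int n * r0 i) \<or> lt t (\<lambda>i. s i + int n * r0 i)) \<and>
    fst ((ham_bracket m x ^^ n) (hv s)) (\<lambda>i. s i + int n * r0 i) = (fst x r0 * of_int (sympl m r0 s))^n"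
proof (induction n)
  case 0
  have e: "(\<lambda>i. s i + int 0 * r0 i) = s" by simp
  show ?case unfolding e by (simp add: hv_def)
next
  case (Suc n)
  define T where "T = (\<lambda>n::nat. (\<lambda>i. s i + int n * r0 i))"
  let ?y = "(ham_bracket m x ^^ n) (hv s)"
  let ?S = "{r. fst x r \<noteq> 0}"
  define A where "A = T n"
  define B where "B = T (Suc n)"
  have sub: "lt (\<lambda>i. a i - c i) (\<lambda>i. b i - c i)" if "lt a b" for a b c
    using tra[OF that, of "\<lambda>i. - c i"] by simp
  have neg: "lt (\<lambda>i. c i - b i) (\<lambda>i. c i - a i)" if "lt a b" for a b c
  proof -
    have "(\<lambda>i. a i + (c i - a i - b i)) = (\<lambda>i. c i - b i)" "(\<lambda>i. b i + (c i - a i - b i)) = (\<lambda>i. c i - a i)"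
      by (rule ext, simp)+
    then show ?thesis using tra[OF that, of "\<lambda>i. c i - a i - b i"] by simp
  qed
  have BA: "(\<lambda>i. B i - r0 i) = A" by (rule ext) (simp add: A_def B_def T_def algebra_simps)
  have AB: "lt A B"
  proof -
    have "(\<lambda>i. 0 + A i) = A" "(\<lambda>i. r0 i + A i) = B" by (rule ext, simp add: A_def B_def T_def algebra_simps)+
    then show ?thesis using tra[OF r0(3), of A] by simp
  qed
  have IH: "snd ?y = (\<lambda>i. 0)" "\<And>t. fst ?y t \<noteq> 0 \<Longrightarrow> t = A \<or> lt t A" "fst ?y A = (fst x r0 * of_int (sympl m r0 s))^n"
    using Suc by (auto simp: A_def T_def)
  have Z1: "fst ?y t = 0" if "lt A t" for t
  proof (rule ccontr)
    assume "fst ?y t \<noteq> 0"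
    then have "t = A \<or> lt t A" by (rule IH(2))
    then show False using that irr tr by blast
  qed
  have Z2: "fst ?y (\<lambda>i. t i - r i) = 0" if "t = B \<or> lt B t" "r \<in> ?S" "r \<noteq> r0 \<or> lt B t" for t r
  proof -
    have a1: "A = (\<lambda>i. t i - r0 i) \<or> lt A (\<lambda>i. t i - r0 i)"
      using that(1) sub[of B t r0] BA by auto
    have "lt A (\<lambda>i. t i - r i)"
    proof (cases "r = r0")
      case True
      then have "lt B t" using that(3) by simp
      then show ?thesis using sub[of B t r0] BA True by simp
    next
      case False
      then have "lt r r0" using r0(2) that(2) by simp
      then have "lt (\<lambda>i. t i - r0 i) (\<lambda>i. t i - r i)" by (rule neg)
      then show ?thesis using a1 tr by metis
    qed
    then show ?thesis by (rule Z1)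
  qed
  have snd_new: "snd ((ham_bracket m x ^^ Suc n) (hv s)) = (\<lambda>i. 0)" by (simp add: bracket_snd)
  have supp: "t = B \<or> lt t B" if "fst ((ham_bracket m x ^^ Suc n) (hv s)) t \<noteq> 0" for t
  proof (rule ccontr)
    assume "\<not> (t = B \<or> lt t B)"
    then have tB: "lt B t" using tot by blast
    have "(\<Sum>r\<in>?S. fst x r * fst ?y (\<lambda>i. t i - r i) * of_int (sympl m r (\<lambda>i. t i - r i))) = 0"
      using Z2[of t] tB by (intro sum.neutral) auto
    moreover have "fst ?y t = 0" using Z1 tr AB tB by blast
    ultimately have "fst ((ham_bracket m x ^^ Suc n) (hv s)) t = 0"
      by (simp add: bracket_fst IH(1) pair_zero)
    then show False using that by simp
  qed
  have pos: "lt (\<lambda>i. 0) (T k)" for k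
  proof (induction k)
    case 0 then show ?case using s by (simp add: T_def)
  next
    case (Suc k)
    have "(\<lambda>i. 0 + T k i) = T k" "(\<lambda>i. r0 i + T k i) = T (Suc k)" by (rule ext, simp add: T_def algebra_simps)+
    then have "lt (T k) (T (Suc k))" using tra[OF r0(3), of "T k"] by simp
    then show ?case using Suc tr by blast
  qed
  have Bnz: "B \<noteq> (\<lambda>i. 0)" using pos[of "Suc n"] irr unfolding B_def by metis
  have r0S: "r0 \<in> ?S" using r0(1) by simp
  have "(\<Sum>r\<in>?S. fst x r * fst ?y (\<lambda>i. B i - r i) * of_int (sympl m r (\<lambda>i. B i - r i)))
      = fst x r0 * fst ?y (\<lambda>i. B i - r0 i) * of_int (sympl m r0 (\<lambda>i. B i - r0 i))
        + (\<Sum>r\<in>?S - {r0}. fst x r * fst ?y (\<lambda>i. B i - r i) * of_int (sympl m r (\<lambda>i. B i - r i)))"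
    by (rule sum.remove[OF fin r0S])
  also have "(\<Sum>r\<in>?S - {r0}. fst x r * fst ?y (\<lambda>i. B i - r i) * of_int (sympl m r (\<lambda>i. B i - r i))) = 0"
    using Z2[of B] by (intro sum.neutral) auto
  also have "sympl m r0 A = sympl m r0 s" unfolding A_def T_def by (rule sympl_add)
  then have "fst x r0 * fst ?y (\<lambda>i. B i - r0 i) * of_int (sympl m r0 (\<lambda>i. B i - r0 i))
      = (fst x r0 * of_int (sympl m r0 s))^(Suc n)"
    unfolding BA IH(3) by (simp add: algebra_simps)
  finally have sumB: "(\<Sum>r\<in>?S. fst x r * fst ?y (\<lambda>i. B i - r i) * of_int (sympl m r (\<lambda>i. B i - r i)))
      = (fst x r0 * of_int (sympl m r0 s))^(Suc n)" by simp
  have "fst ?y B = 0" using Z1 AB by blast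
  then have valB: "fst ((ham_bracket m x ^^ Suc n) (hv s)) B = (fst x r0 * of_int (sympl m r0 s))^(Suc n)"
    using sumB Bnz by (simp add: bracket_fst IH(1) pair_zero)
  show ?case using snd_new supp valB unfolding B_def T_def by blast
qed

lemma sympl_e1: "j < m \<Longrightarrow> sympl m r (\<lambda>i. if i = j then 1 else 0) = r (j + m)"
proof -
  assume j: "j < m"
  have "sympl m r (\<lambda>i. if i = j then 1 else 0) = (\<Sum>i<m. if i = j then r (j + m) else 0)"
    unfolding sympl_def using j by (intro sum.cong) auto
  then show ?thesis using j by simp
qed

lemma sympl_e2: "j < m \<Longrightarrow> sympl m r (\<lambda>i. if i = j + m then 1 else 0) = - r j"
proof -
  assume j: "j < m"
  have "sympl m r (\<lambda>i. if i = j + m then 1 else 0) = (\<Sum>i<m. if i = j then - r j else 0)"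
    unfolding sympl_def
  proof (rule sum.cong)
    fix i assume "i \<in> {..<m}"
    then have "i \<noteq> j + m" by simp
    then show "r (i + m) * (if i = j + m then 1 else 0) - r i * (if i + m = j + m then 1 else 0) = (if i = j then - r j else 0)"
      by simp
  qed simp
  then show ?thesis using j by simp
qed

lemma sympl_neg: "sympl m r (\<lambda>i. - a i) = - sympl m r a"
  unfolding sympl_def by (simp add: sum_negf[symmetric] algebra_simps)

lemma key:
  fixes \<sigma> :: "('k::field_char_0) ham \<Rightarrow> 'k ham" and lt :: "(nat\<Rightarrow>int) \<Rightarrow> (nat\<Rightarrow>int) \<Rightarrow> bool"
  assumes aut: "ham_aut m \<sigma>" and d: "d \<in> ham_cartan m"
    and irr: "\<And>a. \<not> lt a a" and tr: "\<And>a b c. lt a b \<Longrightarrow> lt b c \<Longrightarrow> lt a c"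
    and tot: "\<And>a b. a = b \<or> lt a b \<or> lt b a"
    and tra: "\<And>a b w. lt a b \<Longrightarrow> lt (\<lambda>i. a i + w i) (\<lambda>i. b i + w i)"
    and r0: "fst (\<sigma> d) r0 \<noteq> 0" "\<And>r. fst (\<sigma> d) r \<noteq> 0 \<Longrightarrow> r \<noteq> r0 \<Longrightarrow> lt r r0" "lt (\<lambda>i. 0) r0"
  shows False
proof -
  let ?x = "\<sigma> d"
  have dc: "d \<in> ham_carrier m" using d by (simp add: ham_cartan_def)
  have xc: "?x \<in> ham_carrier m" by (rule aut_carrier[OF aut dc])
  have fin: "finite {r. fst ?x r \<noteq> 0}" using xc by (simp add: carrier_iff)
  have r0l: "r0 \<in> lat (2*m)" "r0 \<noteq> (\<lambda>i. 0)" using xc r0(1) by (auto simp: carrier_iff)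
  obtain k where k: "r0 k \<noteq> 0" using r0l(2) by auto
  have k2: "k < 2*m" using k r0l(1) by (auto simp: lat_def) (meson not_le)
  obtain e where e: "e \<in> lat (2*m)" "e \<noteq> (\<lambda>i. 0)" "sympl m r0 e \<noteq> 0"
  proof (cases "k < m")
    case True
    define e where "e = (\<lambda>i. if i = k + m then (1::int) else 0)"
    have "e \<in> lat (2*m)" "e \<noteq> (\<lambda>i. 0)" using True by (auto simp: lat_def e_def fun_eq_iff)
    moreover have "sympl m r0 e \<noteq> 0" using True k by (simp add: e_def sympl_e2)
    ultimately show ?thesis using that by blast
  next
    case False
    define j where "j = k - m"
    have j: "j < m" "k = j + m" using False k2 by (auto simp: j_def)
    define e where "e = (\<lambda>i. if i = j then (1::int) else 0)"
    have "e \<in> lat (2*m)" "e \<noteq> (\<lambda>i. 0)" using j by (auto simp: lat_def e_def fun_eq_iff)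
    moreover have "sympl m r0 e \<noteq> 0" using j k by (simp add: e_def sympl_e1)
    ultimately show ?thesis using that by blast
  qed
  obtain s where s: "s \<in> lat (2*m)" "lt (\<lambda>i. 0) s" "sympl m r0 s \<noteq> 0"
  proof (cases "lt (\<lambda>i. 0) e")
    case True
    then show ?thesis using that e by blast
  next
    case False
    then have "lt e (\<lambda>i. 0)" using tot[of e "\<lambda>i. 0"] e(2) by blast
    then have "lt (\<lambda>i. e i + - e i) (\<lambda>i. 0 + - e i)" by (rule tra)
    then have "lt (\<lambda>i. 0) (\<lambda>i. - e i)" by simp
    moreover have "(\<lambda>i. - e i) \<in> lat (2*m)" using e(1) by (simp add: lat_def)
    moreover have "sympl m r0 (\<lambda>i. - e i) \<noteq> 0" using e(3) by (simp add: sympl_neg)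
    ultimately show ?thesis using that by blast
  qed
  have snz: "s \<noteq> (\<lambda>i. 0)" using s(2) irr[of s] by blast
  have hsc: "(hv s :: 'k ham) \<in> ham_carrier m" by (rule hv_carrier[OF s(1) snz])
  obtain z where z: "z \<in> ham_carrier m" "\<sigma> z = hv s"
  proof -
    have "\<sigma> ` ham_carrier m = ham_carrier m" using aut unfolding ham_aut_def bij_betw_def by blast
    then have "hv s \<in> \<sigma> ` ham_carrier m" using hsc by simp
    then obtain z0 where "z0 \<in> ham_carrier m" "hv s = \<sigma> z0" by blast
    then show ?thesis using that by simp
  qed
  obtain u where du: "d = ((\<lambda>r. 0), u)" using d by (cases d) (auto simp: ham_cartan_def)
  define F where "F = {r. fst z r \<noteq> 0}"
  have Ffin: "finite F" using z(1) by (simp add: carrier_iff F_def)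
  have Fl: "t \<in> lat (2*m) \<and> t \<noteq> (\<lambda>i. 0)" if "t \<in> F" for t using z(1) that by (auto simp: carrier_iff F_def)
  define G where "G = (\<Union>t\<in>F. {r. fst (\<sigma> (hv t)) r \<noteq> 0})"
  have Gfin: "finite G" unfolding G_def
  proof (rule finite_UN_I[OF Ffin])
    fix t assume "t \<in> F"
    then have "(hv t :: 'k ham) \<in> ham_carrier m" using Fl hv_carrier by blast
    then have "\<sigma> (hv t) \<in> ham_carrier m" by (rule aut_carrier[OF aut])
    then show "finite {r. fst (\<sigma> (hv t)) r \<noteq> 0}" by (simp add: carrier_iff)
  qed
  define T where "T = (\<lambda>n::nat. (\<lambda>i. s i + int n * r0 i))"
  have inG: "T (Suc n) \<in> G" for n
  proof -
    let ?q = "(ham_bracket m d ^^ Suc n) z"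
    have q: "?q \<in> ham_carrier m" "\<forall>r. fst ?q r \<noteq> 0 \<longrightarrow> r \<in> F" "snd ?q = (\<lambda>i. 0)"
      using iter_cartan[OF z(1), where u=u and n="Suc n"] du by (auto simp: F_def)
    have L: "\<forall>r. fst (\<sigma> ?q) r \<noteq> 0 \<longrightarrow> r \<in> G"
      using lin_decomp[OF aut Ffin q(1) q(3) q(2)] by (simp add: G_def)
    have eq0: "\<sigma> ?q = (ham_bracket m ?x ^^ Suc n) (\<sigma> z)" by (rule iter_sigma[OF aut d z(1)])
    have eq: "\<sigma> ?q = (ham_bracket m ?x ^^ Suc n) (hv s)" using eq0 unfolding z(2) .
    have "fst ((ham_bracket m ?x ^^ Suc n) (hv s)) (T (Suc n)) = (fst ?x r0 * of_int (sympl m r0 s))^(Suc n)"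
      unfolding T_def by (rule conjunct2[OF conjunct2[OF iter_top[OF fin irr tr tot tra r0 s(2), where m=m and n="Suc n"]]])
    moreover have "(fst ?x r0 * of_int (sympl m r0 s))^(Suc n) \<noteq> (0::'k)"
      using r0(1) s(3) by simp
    ultimately have "fst (\<sigma> ?q) (T (Suc n)) \<noteq> 0" using eq by simp
    then show ?thesis using L by blast
  qed
  have "inj (\<lambda>n. T (Suc n))"
  proof (rule injI)
    fix a b assume "T (Suc a) = T (Suc b)"
    then have "T (Suc a) k = T (Suc b) k" by simp
    then have "s k + int (Suc a) * r0 k = s k + int (Suc b) * r0 k" unfolding T_def by simp
    then show "a = b" using k by simp
  qed
  moreover have "range (\<lambda>n. T (Suc n)) \<subseteq> G" using inG by auto
  ultimately have "finite (UNIV :: nat set)"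
    using Gfin finite_imageD[of "\<lambda>n. T (Suc n)" UNIV] finite_subset by blast
  then show False by simp
qed

lemma less_fun_total:
  fixes a b :: "nat \<Rightarrow> int"
  shows "a = b \<or> less_fun a b \<or> less_fun b a"
proof (cases "a = b")
  case False
  then obtain k0 where "a k0 \<noteq> b k0" by auto
  define k where "k = (LEAST k. a k \<noteq> b k)"
  have k: "a k \<noteq> b k" unfolding k_def by (rule LeastI, fact)
  have lt: "\<forall>j<k. a j = b j" unfolding k_def using not_less_Least by blast
  show ?thesis
  proof (cases "a k < b k")
    case True then show ?thesis using lt unfolding less_fun_def by blast
  next
    case False then have "b k < a k" using k by simp
    then show ?thesis using lt unfolding less_fun_def by (metis)
  qed
qed simp

lemma less_fun_transl:
  fixes a b w :: "nat \<Rightarrow> int"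
  shows "less_fun a b \<Longrightarrow> less_fun (\<lambda>i. a i + w i) (\<lambda>i. b i + w i)"
  unfolding less_fun_def by auto

lemma max_exists:
  assumes "finite S" "S \<noteq> {}"
    and tr: "\<And>a b c. lt a b \<Longrightarrow> lt b c \<Longrightarrow> lt a c"
    and tot: "\<And>a b. a = b \<or> lt a b \<or> lt b a"
  shows "\<exists>r0\<in>S. \<forall>r\<in>S. r \<noteq> r0 \<longrightarrow> lt r r0"
  using assms(1,2)
proof (induction S rule: finite_ne_induct)
  case (singleton x) then show ?case by simp
next
  case (insert x F)
  then obtain r0 where r0: "r0 \<in> F" "\<forall>r\<in>F. r \<noteq> r0 \<longrightarrow> lt r r0" by blast
  show ?case
  proof (cases "lt r0 x")
    case True
    then show ?thesis using r0 tr by (metis insert_iff)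
  next
    case False
    then have "x = r0 \<or> lt x r0" using tot by blast
    then show ?thesis using r0 by auto
  qed
qed

lemma cartan_pres:
  fixes \<sigma> :: "('k::field_char_0) ham \<Rightarrow> 'k ham"
  assumes aut: "ham_aut m \<sigma>" and d: "d \<in> ham_cartan m"
  shows "\<sigma> d \<in> ham_cartan m"
proof (rule ccontr)
  assume nc: "\<sigma> d \<notin> ham_cartan m"
  have dc: "d \<in> ham_carrier m" using d by (simp add: ham_cartan_def)
  have xc: "\<sigma> d \<in> ham_carrier m" by (rule aut_carrier[OF aut dc])
  let ?S = "{r. fst (\<sigma> d) r \<noteq> 0}"
  have fin: "finite ?S" using xc by (simp add: carrier_iff)
  have ne: "?S \<noteq> {}" using nc xc by (auto simp: ham_cartan_def)
  have nz: "r \<noteq> (\<lambda>i. 0)" if "r \<in> ?S" for r using xc that by (auto simp: carrier_iff)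
  obtain r1 where r1: "r1 \<in> ?S" "\<forall>r\<in>?S. r \<noteq> r1 \<longrightarrow> less_fun r r1"
    using max_exists[OF fin ne, of less_fun] less_fun_trans less_fun_total by blast
  show False
  proof (cases "less_fun (\<lambda>i. 0) r1")
    case True
    show False
      by (rule key[OF aut d, of less_fun r1]) (use r1 True less_fun_irrefl less_fun_trans less_fun_total less_fun_transl in auto)
  next
    case False
    then have r1n: "less_fun r1 (\<lambda>i. 0)" using less_fun_total[of r1 "\<lambda>i. 0"] nz[OF r1(1)] by blast
    obtain r2 where r2: "r2 \<in> ?S" "\<forall>r\<in>?S. r \<noteq> r2 \<longrightarrow> less_fun r2 r"
      using max_exists[OF fin ne, of "\<lambda>a b. less_fun b a"] less_fun_trans less_fun_total by blast
    have "less_fun r2 (\<lambda>i. 0)"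
    proof (cases "r2 = r1")
      case True then show ?thesis using r1n by simp
    next
      case False then have "less_fun r2 r1" using r1 r2(1) by blast
      then show ?thesis using r1n less_fun_trans by blast
    qed
    then have r2p: "less_fun r2 (\<lambda>i. 0)" .
    have t1: "\<And>a b::nat\<Rightarrow>int. a = b \<or> less_fun b a \<or> less_fun a b" using less_fun_total by blast
    have t2: "\<And>a b c::nat\<Rightarrow>int. less_fun b a \<Longrightarrow> less_fun c b \<Longrightarrow> less_fun c a" using less_fun_trans by blast
    have t3: "\<And>a b w::nat\<Rightarrow>int. less_fun b a \<Longrightarrow> less_fun (\<lambda>i. b i + w i) (\<lambda>i. a i + w i)" using less_fun_transl by blast
    have t4: "\<And>r. fst (\<sigma> d) r \<noteq> 0 \<Longrightarrow> r \<noteq> r2 \<Longrightarrow> less_fun r2 r" using r2 by blast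
    show False
      by (rule key[OF aut d, of "\<lambda>a b. less_fun b a" r2, OF less_fun_irrefl t2 t1 t3]) (use r2 r2p t4 in auto)
  qed
qed

lemma derived_pres:
  fixes \<sigma> :: "('k::field_char_0) ham \<Rightarrow> 'k ham"
  assumes aut: "ham_aut m \<sigma>" and q: "q \<in> ham_derived m"
  shows "\<sigma> q \<in> ham_derived m"
proof -
  have qc: "q \<in> ham_carrier m" "snd q = (\<lambda>i. 0)" using q by (auto simp: ham_derived_def)
  have fin: "finite {r. fst q r \<noteq> 0}" using qc by (simp add: carrier_iff)
  have "snd (\<sigma> q) = (\<lambda>i. 0)" using lin_decomp[OF aut fin qc] by blast
  then show ?thesis using aut_carrier[OF aut qc(1)] by (simp add: ham_derived_def)
qed

lemma decomp:
  assumes "z \<in> ham_carrier m"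
  shows "((\<lambda>r. 0), snd z) \<in> ham_cartan m" "(fst z, (\<lambda>i. 0)) \<in> ham_derived m"
    "z = ham_add ((\<lambda>r. 0), snd z) (fst z, (\<lambda>i. 0))"
  using assms by (auto simp: ham_cartan_def ham_derived_def carrier_iff ham_add_def)

lemma aut_zero_inj:
  assumes aut: "ham_aut m \<sigma>" and x: "x \<in> ham_carrier m" and z: "\<sigma> x = ((\<lambda>r. 0), (\<lambda>i. 0))"
  shows "x = ((\<lambda>r. 0), (\<lambda>i. 0))"
proof -
  have x0: "ham_scale 0 x \<in> ham_carrier m" by (rule scale_carrier[OF x])
  have "\<sigma> (ham_scale 0 x) = \<sigma> x" using aut_zero[OF aut x] z by simp
  moreover have "inj_on \<sigma> (ham_carrier m)" using aut by (simp add: ham_aut_def bij_betw_def)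
  ultimately have "ham_scale 0 x = x" using x0 x by (meson inj_onD)
  then show ?thesis by (simp add: ham_scale_def)
qed

theorem lemma3p5:
  fixes m :: nat and \<sigma> :: "('k::{alg_closed_field, field_char_0}) ham \<Rightarrow> 'k ham"
  assumes "m \<ge> 1"
    and "ham_aut m \<sigma>"
  shows "\<sigma> ` ham_derived m = ham_derived m \<and> \<sigma> ` ham_cartan m = ham_cartan m"
proof -
  note aut = assms(2)
  have img: "\<sigma> ` ham_carrier m = ham_carrier m" using aut unfolding ham_aut_def bij_betw_def by blast
  have pre: "\<exists>z\<in>ham_carrier m. e = \<sigma> z" if "e \<in> ham_carrier m" for e :: "'k ham"
    using that img by blast
  have split: "\<sigma> z = ham_add (\<sigma> ((\<lambda>r. 0), snd z)) (\<sigma> (fst z, (\<lambda>i. 0)))"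
    "\<sigma> ((\<lambda>r. 0), snd z) \<in> ham_cartan m" "\<sigma> (fst z, (\<lambda>i. 0)) \<in> ham_derived m"
    if "z \<in> ham_carrier m" for z :: "'k ham"
  proof -
    have c: "((\<lambda>r. 0), snd z) \<in> ham_cartan m" "(fst z, (\<lambda>i. 0)) \<in> ham_derived m" using decomp[OF that] by auto
    have cc: "((\<lambda>r. 0), snd z) \<in> ham_carrier m" "(fst z, (\<lambda>i. 0)) \<in> ham_carrier m"
      using c by (auto simp: ham_cartan_def ham_derived_def)
    show "\<sigma> z = ham_add (\<sigma> ((\<lambda>r. 0), snd z)) (\<sigma> (fst z, (\<lambda>i. 0)))"
      using aut cc decomp(3)[OF that] unfolding ham_aut_def by metis
    show "\<sigma> ((\<lambda>r. 0), snd z) \<in> ham_cartan m" by (rule cartan_pres[OF aut c(1)])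
    show "\<sigma> (fst z, (\<lambda>i. 0)) \<in> ham_derived m" by (rule derived_pres[OF aut c(2)])
  qed
  have D: "\<sigma> ` ham_derived m = ham_derived m"
  proof
    show "\<sigma> ` ham_derived m \<subseteq> ham_derived m" using derived_pres[OF aut] by blast
  next
    show "ham_derived m \<subseteq> \<sigma> ` ham_derived m"
    proof
      fix e :: "'k ham" assume e: "e \<in> ham_derived m"
      then have "e \<in> ham_carrier m" by (simp add: ham_derived_def)
      then obtain z where z: "z \<in> ham_carrier m" "e = \<sigma> z" using pre by blast
      note sp = split[OF z(1)]
      have zc: "((\<lambda>r. 0), snd z) \<in> ham_carrier m" using decomp(1)[OF z(1)] by (simp add: ham_cartan_def)
      have "\<sigma> ((\<lambda>r. 0), snd z) = ((\<lambda>r. 0), (\<lambda>i. 0))"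
      proof -
        have "snd e = (\<lambda>i. 0)" using e by (simp add: ham_derived_def)
        then have "snd (\<sigma> ((\<lambda>r. 0), snd z)) = (\<lambda>i. 0)" using sp(1,3) z(2)
          by (auto simp: ham_add_def ham_derived_def fun_eq_iff)
        moreover have "fst (\<sigma> ((\<lambda>r. 0), snd z)) = (\<lambda>r. 0)" using sp(2) by (simp add: ham_cartan_def)
        ultimately show ?thesis by (metis prod.collapse)
      qed
      then have "((\<lambda>r. 0), snd z) = ((\<lambda>r::nat\<Rightarrow>int. 0::'k), (\<lambda>i. 0::'k))" by (rule aut_zero_inj[OF aut zc])
      then have "snd z = (\<lambda>i. 0)" by simp
      then have "z \<in> ham_derived m" using z(1) by (simp add: ham_derived_def)
      then show "e \<in> \<sigma> ` ham_derived m" using z(2) by blast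
    qed
  qed
  have C: "\<sigma> ` ham_cartan m = ham_cartan m"
  proof
    show "\<sigma> ` ham_cartan m \<subseteq> ham_cartan m" using cartan_pres[OF aut] by blast
  next
    show "ham_cartan m \<subseteq> \<sigma> ` ham_cartan m"
    proof
      fix e :: "'k ham" assume e: "e \<in> ham_cartan m"
      then have "e \<in> ham_carrier m" by (simp add: ham_cartan_def)
      then obtain z where z: "z \<in> ham_carrier m" "e = \<sigma> z" using pre by blast
      note sp = split[OF z(1)]
      have zh: "(fst z, (\<lambda>i. 0)) \<in> ham_carrier m" using decomp(2)[OF z(1)] by (simp add: ham_derived_def)
      have "\<sigma> (fst z, (\<lambda>i. 0)) = ((\<lambda>r. 0), (\<lambda>i. 0))"
      proof -
        have "fst e = (\<lambda>r. 0)" using e by (simp add: ham_cartan_def)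
        then have "fst (\<sigma> (fst z, (\<lambda>i. 0))) = (\<lambda>r. 0)" using sp(1,2) z(2)
          by (auto simp: ham_add_def ham_cartan_def fun_eq_iff)
        moreover have "snd (\<sigma> (fst z, (\<lambda>i. 0))) = (\<lambda>i. 0)" using sp(3) by (simp add: ham_derived_def)
        ultimately show ?thesis by (metis prod.collapse)
      qed
      then have "(fst z, (\<lambda>i::nat. 0::'k)) = ((\<lambda>r::nat\<Rightarrow>int. 0::'k), (\<lambda>i::nat. 0::'k))" by (rule aut_zero_inj[OF aut zh])
      then have "fst z = (\<lambda>r. 0)" by simp
      then have "z \<in> ham_cartan m" using z(1) by (simp add: ham_cartan_def)
      then show "e \<in> \<sigma> ` ham_cartan m" using z(2) by blast
    qed
  qed
  show ?thesis using D C by blast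
qed

end
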